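(* Every vertex of a cubic brick $G$ is $\lambda$-matchable; that is, $\lambda(G)=n(G)$.
   Context: A brick is a nonbipartite matching covered graph with no nontrivial tight cut (a cut $C$ is tight if $|C\cap M|=1$ for every perfect matching $M$; trivial if one shore has at most one vertex). For a vertex $v$ of a cubic graph $G$, a $v$-matching is a spanning subgraph in which $v$ has degree $3$ and every other vertex degree $1$; $v$ is $\lambda$-matchable if a $v$-matching exists; $\lambda(G)$ counts such vertices. *)

theory Defs
  imports Main
begin

text \<open>Finite simple graphs: vertex set V, edge set E of 2-element subsets of V.
  (Cubic bricks are necessarily simple, so no generality is lost.)\<close>

definition graph :: "'a set \<Rightarrow> 'a set set \<Rightarrow> bool" where
  "graph V E \<longleftrightarrow> finite V \<and> (\<forall>e\<in>E. \<exists>u v. e = {u, v} \<and> u \<noteq> v \<and> u \<in> V \<and> v \<in> V)"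

definition degree :: "'a set set \<Rightarrow> 'a \<Rightarrow> nat" where
  "degree F v = card {e \<in> F. v \<in> e}"

definition cubic :: "'a set \<Rightarrow> 'a set set \<Rightarrow> bool" where
  "cubic V E \<longleftrightarrow> graph V E \<and> (\<forall>v\<in>V. degree E v = 3)"

definition perfect_matching :: "'a set \<Rightarrow> 'a set set \<Rightarrow> 'a set set \<Rightarrow> bool" where
  "perfect_matching V E M \<longleftrightarrow> M \<subseteq> E \<and> (\<forall>v\<in>V. degree M v = 1)"

inductive reachable :: "'a set set \<Rightarrow> 'a \<Rightarrow> 'a \<Rightarrow> bool" for E where
  refl: "reachable E u u"
| step: "reachable E u v \<Longrightarrow> {v, w} \<in> E \<Longrightarrow> reachable E u w"

definition connected_graph :: "'a set \<Rightarrow> 'a set set \<Rightarrow> bool" where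
  "connected_graph V E \<longleftrightarrow> (\<forall>u\<in>V. \<forall>v\<in>V. reachable E u v)"

definition matching_covered :: "'a set \<Rightarrow> 'a set set \<Rightarrow> bool" where
  "matching_covered V E \<longleftrightarrow> graph V E \<and> connected_graph V E \<and> E \<noteq> {} \<and>
     (\<forall>e\<in>E. \<exists>M. perfect_matching V E M \<and> e \<in> M)"

definition bipartite :: "'a set \<Rightarrow> 'a set set \<Rightarrow> bool" where
  "bipartite V E \<longleftrightarrow> (\<exists>A. \<forall>e\<in>E. card (e \<inter> A) = 1)"

definition cut :: "'a set set \<Rightarrow> 'a set \<Rightarrow> 'a set set" where
  "cut E X = {e \<in> E. card (e \<inter> X) = 1}"

definition tight_cut :: "'a set \<Rightarrow> 'a set set \<Rightarrow> 'a set \<Rightarrow> bool" where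
  "tight_cut V E X \<longleftrightarrow> X \<subseteq> V \<and>
     (\<forall>M. perfect_matching V E M \<longrightarrow> card (cut E X \<inter> M) = 1)"

definition nontrivial_shore :: "'a set \<Rightarrow> 'a set \<Rightarrow> bool" where
  "nontrivial_shore V X \<longleftrightarrow> X \<subseteq> V \<and> card X \<ge> 2 \<and> card (V - X) \<ge> 2"

definition brick :: "'a set \<Rightarrow> 'a set set \<Rightarrow> bool" where
  "brick V E \<longleftrightarrow> matching_covered V E \<and> \<not> bipartite V E \<and>
     \<not> (\<exists>X. nontrivial_shore V X \<and> tight_cut V E X)"

definition v_matching :: "'a set \<Rightarrow> 'a set set \<Rightarrow> 'a \<Rightarrow> 'a set set \<Rightarrow> bool" where
  "v_matching V E v F \<longleftrightarrow> F \<subseteq> E \<and> degree F v = 3 \<and> (\<forall>u\<in>V - {v}. degree F u = 1)"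

definition lambda_matchable :: "'a set \<Rightarrow> 'a set set \<Rightarrow> 'a \<Rightarrow> bool" where
  "lambda_matchable V E v \<longleftrightarrow> v \<in> V \<and> (\<exists>F. v_matching V E v F)"

definition lambda :: "'a set \<Rightarrow> 'a set set \<Rightarrow> nat" where
  "lambda V E = card {v \<in> V. lambda_matchable V E v}"

end

theory Submission
  imports Defs
begin


definition pmfun :: "'a set \<Rightarrow> 'a set set \<Rightarrow> ('a \<Rightarrow> 'a) \<Rightarrow> bool" where
  "pmfun V E m \<longleftrightarrow> (\<forall>v\<in>V. m v \<in> V \<and> m v \<noteq> v \<and> m (m v) = v \<and> {v, m v} \<in> E)"

lemma even_card_inv:
  assumes "finite K" "\<forall>x\<in>K. f x \<in> K \<and> f x \<noteq> x \<and> f (f x) = x"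
  shows "even (card K)"
  using assms
proof (induct "card K" arbitrary: K rule: less_induct)
  case less
  show ?case
  proof (cases "K = {}")
    case True thus ?thesis by simp
  next
    case False
    then obtain x where x: "x \<in> K" by auto
    have fx: "f x \<in> K" "f x \<noteq> x" using less.prems x by auto
    have sub: "{x, f x} \<subseteq> K" using x fx by auto
    have c2: "card {x, f x} = 2" using fx by auto
    have ck: "card (K - {x, f x}) = card K - 2"
      using card_Diff_subset[OF _ sub] c2 by simp
    have ge: "card K \<ge> 2" using card_mono[OF less.prems(1) sub] c2 by simp
    have "even (card (K - {x, f x}))"
    proof (rule less.hyps)
      show "card (K - {x, f x}) < card K" using ck ge by simp
      show "finite (K - {x, f x})" using less.prems by simp
      show "\<forall>y\<in>K - {x, f x}. f y \<in> K - {x, f x} \<and> f y \<noteq> y \<and> f (f y) = y"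
      proof
        fix y assume y: "y \<in> K - {x, f x}"
        have a: "f y \<in> K" "f y \<noteq> y" "f (f y) = y" using less.prems(2) y by auto
        have b: "f (f x) = x" using less.prems(2) x by auto
        have "f y \<noteq> x" using a b y by auto
        moreover have "f y \<noteq> f x"
        proof
          assume "f y = f x"
          hence "f (f y) = f (f x)" by simp
          thus False using a b y by auto
        qed
        ultimately show "f y \<in> K - {x, f x} \<and> f y \<noteq> y \<and> f (f y) = y" using a by auto
      qed
    qed
    thus ?thesis using ck ge by simp
  qed
qed

lemma even_pairing:
  assumes "finite B" "even (card B)"
  shows "\<exists>p. \<forall>v\<in>B. p v \<in> B \<and> p v \<noteq> v \<and> p (p v) = v"
  using assms
proof (induct "card B" arbitrary: B rule: less_induct)
  case less
  show ?case
  proof (cases "B = {}")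
    case True thus ?thesis by simp
  next
    case False
    then obtain x where x: "x \<in> B" by auto
    have "card B \<noteq> 0" using False less.prems by simp
    hence "card B \<ge> 2" using less.prems(2) by presburger
    hence "card (B - {x}) \<ge> 1" using x less.prems by simp
    then obtain y where y: "y \<in> B" "y \<noteq> x"
      by (metis Diff_iff card.empty ex_in_conv insertI1 not_one_le_zero)
    have sub: "{x, y} \<subseteq> B" using x y by auto
    have c2: "card {x, y} = 2" using y by auto
    have ck: "card (B - {x, y}) = card B - 2"
      using card_Diff_subset[OF _ sub] c2 by simp
    have ge: "card B \<ge> 2" using card_mono[OF less.prems(1) sub] c2 by simp
    have "\<exists>p. \<forall>v\<in>B - {x, y}. p v \<in> B - {x, y} \<and> p v \<noteq> v \<and> p (p v) = v"
    proof (rule less.hyps)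
      show "card (B - {x, y}) < card B" using ck ge by simp
      show "finite (B - {x, y})" using less.prems by simp
      show "even (card (B - {x, y}))" using ck ge less.prems by simp
    qed
    then obtain p where p: "\<forall>v\<in>B - {x, y}. p v \<in> B - {x, y} \<and> p v \<noteq> v \<and> p (p v) = v" by blast
    define q where "q = p(x := y, y := x)"
    have "\<forall>v\<in>B. q v \<in> B \<and> q v \<noteq> v \<and> q (q v) = v"
      using p x y unfolding q_def by auto
    thus ?thesis by blast
  qed
qed

lemma glue:
  assumes disj: "\<forall>B1\<in>P. \<forall>B2\<in>P. B1 \<noteq> B2 \<longrightarrow> B1 \<inter> B2 = {}"
    and un: "\<Union>P = V"
    and blk: "\<forall>B\<in>P. \<exists>p. \<forall>v\<in>B. p v \<in> B \<and> p v \<noteq> v \<and> p (p v) = v \<and> {v, p v} \<in> E"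
  shows "\<exists>m. pmfun V E m"
proof -
  define bl where "bl v = (THE B. B \<in> P \<and> v \<in> B)" for v
  define pb where "pb B = (SOME p. \<forall>v\<in>B. p v \<in> B \<and> p v \<noteq> v \<and> p (p v) = v \<and> {v, p v} \<in> E)" for B
  have blv: "bl v \<in> P \<and> v \<in> bl v" if vV: "v \<in> V" for v
  proof -
    obtain B where B: "B \<in> P" "v \<in> B" using vV un by blast
    have "bl v = B" unfolding bl_def
      by (rule the_equality) (use B disj in auto)
    thus ?thesis using B by simp
  qed
  have blu: "bl v = B" if "B \<in> P" "v \<in> B" for v B
    unfolding bl_def by (rule the_equality) (use that disj in auto)
  have pbp: "\<forall>v\<in>B. pb B v \<in> B \<and> pb B v \<noteq> v \<and> pb B (pb B v) = v \<and> {v, pb B v} \<in> E" if "B \<in> P" for B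
  proof -
    have ex: "\<exists>p. \<forall>v\<in>B. p v \<in> B \<and> p v \<noteq> v \<and> p (p v) = v \<and> {v, p v} \<in> E" using blk that by blast
    show ?thesis using someI_ex[OF ex] unfolding pb_def .
  qed
  define m where "m v = pb (bl v) v" for v
  have "pmfun V E m" unfolding pmfun_def
  proof
    fix v assume v: "v \<in> V"
    have b: "bl v \<in> P" "v \<in> bl v" using blv[OF v] by auto
    have p: "pb (bl v) v \<in> bl v" "pb (bl v) v \<noteq> v" "pb (bl v) (pb (bl v) v) = v" "{v, pb (bl v) v} \<in> E"
      using pbp[OF b(1)] b(2) by auto
    have "bl (pb (bl v) v) = bl v" using blu[OF b(1) p(1)] .
    thus "m v \<in> V \<and> m v \<noteq> v \<and> m (m v) = v \<and> {v, m v} \<in> E"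
      using p b un unfolding m_def by auto
  qed
  thus ?thesis by blast
qed



lemma reach_prepend: "reachable E v w \<Longrightarrow> {u,v} \<in> E \<Longrightarrow> reachable E u w"
proof (induct rule: reachable.induct)
  case refl thus ?case using reachable.refl reachable.step by metis
next
  case (step v w) thus ?case using reachable.step by metis
qed

lemma reach_sym: assumes "reachable E u v" shows "reachable E v u"
  using assms
proof induct
  case refl thus ?case by (rule reachable.refl)
next
  case (step a b)
  thus ?case using reach_prepend insert_commute by metis
qed

lemma reach_trans: "reachable E v w \<Longrightarrow> reachable E u v \<Longrightarrow> reachable E u w"
proof (induct rule: reachable.induct)
  case refl thus ?case .
next
  case (step v w) thus ?case using reachable.step by metis
qed

definition ew :: "'a set set \<Rightarrow> 'a set \<Rightarrow> 'a set set" where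
  "ew E W = {e\<in>E. e \<subseteq> W}"

definition compo :: "'a set set \<Rightarrow> 'a set \<Rightarrow> 'a \<Rightarrow> 'a set" where
  "compo E W u = {q. reachable (ew E W) u q}"

definition comps :: "'a set set \<Rightarrow> 'a set \<Rightarrow> 'a set set" where
  "comps E W = compo E W ` W"

lemma reach_in: "reachable (ew E W) u q \<Longrightarrow> u \<in> W \<Longrightarrow> q \<in> W"
  by (induct rule: reachable.induct) (auto simp: ew_def)

lemma compo_sub: assumes "u \<in> W" shows "compo E W u \<subseteq> W"
proof
  fix x assume "x \<in> compo E W u"
  thus "x \<in> W" using assms reach_in unfolding compo_def by (metis mem_Collect_eq)
qed

lemma compo_self: "u \<in> compo E W u"
  unfolding compo_def by (simp add: reachable.refl)

lemma compo_eq: "q \<in> compo E W u \<Longrightarrow> compo E W q = compo E W u"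
proof -
  assume "q \<in> compo E W u"
  hence uq: "reachable (ew E W) u q" unfolding compo_def by simp
  hence qu: "reachable (ew E W) q u" by (rule reach_sym)
  show ?thesis unfolding compo_def
  proof (intro set_eqI iffI; simp)
    fix r assume "reachable (ew E W) q r" thus "reachable (ew E W) u r" using reach_trans uq by metis
  next
    fix r assume "reachable (ew E W) u r" thus "reachable (ew E W) q r" using reach_trans qu by metis
  qed
qed

lemma comps_disj: "K1 \<in> comps E W \<Longrightarrow> K2 \<in> comps E W \<Longrightarrow> K1 \<noteq> K2 \<Longrightarrow> K1 \<inter> K2 = {}"
proof -
  assume a: "K1 \<in> comps E W" "K2 \<in> comps E W" "K1 \<noteq> K2"
  then obtain u1 u2 where u: "K1 = compo E W u1" "K2 = compo E W u2" unfolding comps_def by auto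
  show ?thesis
  proof (rule ccontr)
    assume "K1 \<inter> K2 \<noteq> {}"
    then obtain x where "x \<in> K1" "x \<in> K2" by auto
    hence "compo E W x = K1" "compo E W x = K2" using compo_eq u by metis+
    thus False using a by simp
  qed
qed

lemma comps_Union: "\<Union>(comps E W) = W"
proof
  show "\<Union>(comps E W) \<subseteq> W"
  proof
    fix x assume "x \<in> \<Union>(comps E W)"
    then obtain u where u: "u \<in> W" "x \<in> compo E W u" unfolding comps_def by auto
    thus "x \<in> W" using compo_sub[OF u(1)] by auto
  qed
  show "W \<subseteq> \<Union>(comps E W)"
  proof
    fix x assume "x \<in> W"
    hence "compo E W x \<in> comps E W" unfolding comps_def by simp
    thus "x \<in> \<Union>(comps E W)" using compo_self[of x E W] by blast
  qed
qed

lemma comps_closed: "K \<in> comps E W \<Longrightarrow> u \<in> K \<Longrightarrow> q \<in> W \<Longrightarrow> {u,q} \<in> E \<Longrightarrow> q \<in> K"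
  unfolding comps_def compo_def
proof clarify
  fix r assume r: "r \<in> W" "reachable (ew E W) r u" "q \<in> W" "{u,q} \<in> E"
  hence "u \<in> W" using reach_in by metis
  hence "{u,q} \<in> ew E W" using r unfolding ew_def by auto
  thus "reachable (ew E W) r q" using r reachable.step by metis
qed

lemma comps_finite: "finite W \<Longrightarrow> finite (comps E W)"
  unfolding comps_def by simp

lemma comps_fin_elem: "finite W \<Longrightarrow> K \<in> comps E W \<Longrightarrow> finite K"
proof -
  assume a: "finite W" "K \<in> comps E W"
  have "K \<subseteq> \<Union>(comps E W)" using a(2) by (rule Union_upper)
  thus ?thesis using a(1) comps_Union[of E W] finite_subset by metis
qed

lemma parity_part:
  assumes "finite W" "\<forall>K1\<in>F. \<forall>K2\<in>F. K1 \<noteq> K2 \<longrightarrow> K1 \<inter> K2 = {}" "\<Union>F = W"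
  shows "even (card W) \<longleftrightarrow> even (card {K\<in>F. odd (card K)})"
proof -
  have "finite (\<Union>F)" using assms(1,3) by simp
  hence fF: "finite F" by (rule finite_UnionD)
  have fK: "finite K" if "K \<in> F" for K
  proof -
    have "K \<subseteq> \<Union>F" using that by (rule Union_upper)
    thus ?thesis using assms(1,3) finite_subset by metis
  qed
  have pw: "pairwise disjnt F" using assms(2) unfolding pairwise_def disjnt_def by blast
  have "card W = sum card F" using card_Union_disjoint[OF pw fK] assms(3) by simp
  thus ?thesis using even_sum_iff[OF fF, of card] by simp
qed



lemma alt:
  assumes m1: "pmfun V (insert {x,z} E) m1" and m2: "pmfun V (insert {y,w} E) m2"
    and xV: "x \<in> V" and yV: "y \<in> V" and zV: "z \<in> V" and wV: "w \<in> V"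
    and m1x: "m1 x = z" and m2y: "m2 y = w"
    and exy: "{x,y} \<in> E" and eyz: "{y,z} \<in> E"
    and yx: "y \<noteq> x" and yz: "y \<noteq> z" and wx: "w \<noteq> x" and wz: "w \<noteq> z"
    and fin: "finite V"
  shows "\<exists>m. pmfun V E m"
proof -
  have M1: "m1 v \<in> V" "m1 v \<noteq> v" "m1 (m1 v) = v" "{v, m1 v} \<in> insert {x,z} E" if "v \<in> V" for v
    using m1 that unfolding pmfun_def by auto
  have M2: "m2 v \<in> V" "m2 v \<noteq> v" "m2 (m2 v) = v" "{v, m2 v} \<in> insert {y,w} E" if "v \<in> V" for v
    using m2 that unfolding pmfun_def by auto
  have m1z: "m1 z = x" using M1(3)[OF xV] m1x by simp
  have m2w: "m2 w = y" using M2(3)[OF yV] m2y by simp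
  have yw: "y \<noteq> w" using M2(2)[OF yV] m2y by simp
  have xz: "x \<noteq> z" using M1(2)[OF xV] m1x by simp
  define tau :: "'a \<times> bool \<Rightarrow> 'a \<times> bool" where
    "tau u = (if snd u then (m1 (fst u), False) else (m2 (fst u), True))" for u
  define taui :: "'a \<times> bool \<Rightarrow> 'a \<times> bool" where
    "taui u = (if snd u then (m2 (fst u), False) else (m1 (fst u), True))" for u
  define s where "s k = (tau ^^ k) (y, True)" for k
  have sS: "s (Suc k) = tau (s k)" for k by (simp add: s_def)
  have s0: "s 0 = (y, True)" by (simp add: s_def)
  have sV: "fst (s k) \<in> V" for k
    by (induct k) (auto simp: s0 sS tau_def M1 M2 yV)
  have inv: "taui (tau u) = u" if "fst u \<in> V" for u
    using that by (cases u) (auto simp: tau_def taui_def M1 M2)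
  have bk: "s k = taui (s (Suc k))" for k using inv[OF sV[of k]] sS by simp
  have tT: "tau (v, True) = (m1 v, False)" for v by (simp add: tau_def)
  have tF: "tau (v, False) = (m2 v, True)" for v by (simp add: tau_def)
  have iT: "taui (v, True) = (m2 v, False)" for v by (simp add: taui_def)
  have iF: "taui (v, False) = (m1 v, True)" for v by (simp add: taui_def)
  define N where "N = card (V \<times> (UNIV::bool set))"
  have finT: "finite (V \<times> (UNIV::bool set))" using fin by simp
  have "\<exists>i j. i < j \<and> s i = s j"
  proof (rule ccontr)
    assume "\<not> ?thesis"
    hence "inj_on s {..N}" unfolding inj_on_def by (metis nat_neq_iff)
    hence c: "card (s ` {..N}) = Suc N" by (simp add: card_image)
    have "s ` {..N} \<subseteq> V \<times> UNIV"
    proof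
      fix u assume "u \<in> s ` {..N}" then obtain k where "u = s k" by auto
      thus "u \<in> V \<times> UNIV" using sV[of k] by (cases "s k") auto
    qed
    hence "card (s ` {..N}) \<le> N" unfolding N_def using finT card_mono by blast
    thus False using c by simp
  qed
  then obtain i j where ij: "i < j" "s i = s j" by blast
  have cancel: "s i = s j \<Longrightarrow> i \<le> j \<Longrightarrow> s 0 = s (j - i)" for i j
  proof (induct i arbitrary: j)
    case 0 thus ?case by simp
  next
    case (Suc i)
    then obtain j' where j': "j = Suc j'" by (cases j) auto
    have "s i = s j'" using Suc.prems(1) bk[of i] bk[of j'] j' by simp
    thus ?case using Suc j' by simp
  qed
  have ex_p: "\<exists>p. 0 < p \<and> s p = s 0"
    using cancel[OF ij(2)] ij(1) by (intro exI[of _ "j - i"]) auto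
  define p where "p = (LEAST p. 0 < p \<and> s p = s 0)"
  have p: "0 < p" "s p = s 0" using LeastI_ex[OF ex_p] unfolding p_def by auto
  have pmin: "s k \<noteq> s 0" if "0 < k" "k < p" for k
    using not_less_Least[of k "\<lambda>p. 0 < p \<and> s p = s 0"] that unfolding p_def by auto
  have sp1: "s (p - 1) = (w, False)"
  proof -
    have "s (p - 1) = taui (s (Suc (p - 1)))" by (rule bk)
    also have "Suc (p - 1) = p" using p(1) by simp
    finally show ?thesis using p(2) s0 iT m2y by simp
  qed
  define hit where "hit k \<longleftrightarrow> fst (s k) \<in> {x,z,w}" for k
  have "hit (p - 1)" unfolding hit_def using sp1 by simp
  hence exh: "\<exists>k. hit k" by blast
  define n where "n = (LEAST k. hit k)"
  have hn: "hit n" using LeastI_ex[OF exh] unfolding n_def .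
  have nmin: "\<not> hit k" if "k < n" for k using not_less_Least[of k hit] that unfolding n_def by auto
  have nle: "n \<le> p - 1" using Least_le[of hit "p - 1"] \<open>hit (p - 1)\<close> unfolding n_def by simp
  have h0: "\<not> hit 0" using s0 yx yz yw by (simp add: hit_def)
  have n1: "1 \<le> n" using hn h0 by (cases n) auto
  have npl: "n < p" using nle p(1) by simp
  have sback: "s (k - 1) = taui (s k)" if "1 \<le> k" for k using bk[of "k - 1"] that by simp
  consider (A) "fst (s n) \<in> {x,z}" | (B) "fst (s n) = w" using hn hit_def by auto
  then show ?thesis
  proof cases
    case A
    define c where "c = fst (s n)"
    define z' where "z' = m1 c"
    have cxz: "c \<in> {x,z}" using A c_def by simp
    have z'xz: "z' \<in> {x,z}" "z' \<noteq> c" using cxz m1x m1z xz unfolding z'_def by auto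
    have cV: "c \<in> V" using sV c_def by simp
    have m1z': "m1 z' = c" using M1(3)[OF cV] z'_def by simp
    have sn: "snd (s n)"
    proof (rule ccontr)
      assume "\<not> snd (s n)"
      hence "s n = (c, False)" using c_def by (metis prod.collapse)
      hence "s (n - 1) = (z', True)" using sback[OF n1] iF z'_def by simp
      hence "hit (n - 1)" using z'xz hit_def by auto
      thus False using nmin n1 by simp
    qed
    have snc: "s n = (c, True)" using sn c_def by (metis prod.collapse)
    define P where "P = {fst (s k) | k. 1 \<le> k \<and> k \<le> n}"
    have inP: "fst (s k) \<in> P" if "1 \<le> k" "k \<le> n" for k using that unfolding P_def by blast
    have PV: "P \<subseteq> V" using sV unfolding P_def by auto
    have F1: "y \<notin> P"
    proof
      assume "y \<in> P" then obtain k where k: "1 \<le> k" "k \<le> n" "fst (s k) = y" unfolding P_def by auto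
      show False
      proof (cases "snd (s k)")
        case True
        hence "s k = s 0" using k s0 by (metis prod.collapse)
        thus False using pmin k npl by simp
      next
        case False
        hence "s k = (y, False)" using k by (metis prod.collapse)
        hence "s (Suc k) = (w, True)" using sS tF m2y by simp
        hence hs: "hit (Suc k)" by (simp add: hit_def)
        show False
        proof (cases "Suc k < n")
          case True thus False using nmin hs by blast
        next
          case False
          hence "Suc k = n \<or> k = n" using k by auto
          thus False using \<open>s (Suc k) = (w, True)\<close> k A wx wz yx yz by auto
        qed
      qed
    qed
    have F2: "z' \<notin> P"
    proof
      assume "z' \<in> P" then obtain k where k: "1 \<le> k" "k \<le> n" "fst (s k) = z'" unfolding P_def by auto
      show False
      proof (cases "k < n")
        case True thus False using nmin[OF True] k z'xz hit_def by auto
      next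
        case False hence "k = n" using k by simp
        thus False using k z'xz c_def by simp
      qed
    qed
    have F3: "w \<notin> P"
    proof
      assume "w \<in> P" then obtain k where k: "1 \<le> k" "k \<le> n" "fst (s k) = w" unfolding P_def by auto
      show False
      proof (cases "k < n")
        case True thus False using nmin[OF True] k hit_def by auto
      next
        case False hence "k = n" using k by simp
        thus False using k cxz c_def wx wz by auto
      qed
    qed
    have F4: "m2 v \<in> P" if vP: "v \<in> P" for v
    proof -
      obtain k where k: "1 \<le> k" "k \<le> n" "fst (s k) = v" using vP unfolding P_def by auto
      show ?thesis
      proof (cases "snd (s k)")
        case False
        hence sk: "s k = (v, False)" using k by (metis prod.collapse)
        have "k \<noteq> n" using sk snc by auto
        hence "Suc k \<le> n" using k by simp
        moreover have "s (Suc k) = (m2 v, True)" using sS sk tF by simp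
        ultimately show ?thesis using inP[of "Suc k"] by simp
      next
        case True
        hence sk: "s k = (v, True)" using k by (metis prod.collapse)
        have skm: "s (k - 1) = (m2 v, False)" using sback[OF k(1)] sk iT by simp
        have "k \<noteq> 1" using skm s0 by auto
        hence "1 \<le> k - 1" "k - 1 \<le> n" using k by auto
        thus ?thesis using inP[of "k - 1"] skm by simp
      qed
    qed
    have F5: "m1 v \<notin> P \<and> m1 v \<noteq> y \<and> m1 v \<noteq> z'" if "v \<in> V" "v \<notin> P" "v \<noteq> y" "v \<noteq> z'" for v
    proof (intro conjI)
      show "m1 v \<noteq> y"
      proof
        assume "m1 v = y"
        hence "v = m1 y" using M1(3)[OF that(1)] by simp
        hence "fst (s 1) = v" using sS[of 0] s0 tT by simp
        thus False using inP[of 1] n1 that(2) by simp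
      qed
      show "m1 v \<noteq> z'"
      proof
        assume "m1 v = z'"
        hence "v = c" using M1(3)[OF that(1)] m1z' by metis
        thus False using inP[of n] n1 c_def that(2) by simp
      qed
      show "m1 v \<notin> P"
      proof
        assume "m1 v \<in> P"
        then obtain k where k: "1 \<le> k" "k \<le> n" "fst (s k) = m1 v" unfolding P_def by auto
        show False
        proof (cases "snd (s k)")
          case True
          hence sk: "s k = (m1 v, True)" using k by (metis prod.collapse)
          hence ss: "s (Suc k) = (v, False)" using sS tT M1(3)[OF that(1)] by simp
          show False
          proof (cases "k < n")
            case True thus False using inP[of "Suc k"] ss k that(2) by simp
          next
            case False hence "k = n" using k by simp
            hence "m1 v = c" using k c_def by simp
            hence "v = z'" using M1(3)[OF that(1)] z'_def by metis
            thus False using that(4) by simp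
          qed
        next
          case False
          hence sk: "s k = (m1 v, False)" using k by (metis prod.collapse)
          hence ss: "s (k - 1) = (v, True)" using sback[OF k(1)] iF M1(3)[OF that(1)] by simp
          show False
          proof (cases "k = 1")
            case True thus False using ss s0 that(3) by simp
          next
            case False
            hence "1 \<le> k - 1" "k - 1 \<le> n" using k by auto
            thus False using inP[of "k - 1"] ss that(2) by simp
          qed
        qed
      qed
    qed
    have z'V: "z' \<in> V" using z'xz xV zV by auto
    have ey: "{y, z'} \<in> E" using z'xz exy eyz by (auto simp: insert_commute)
    have z'y: "z' \<noteq> y" using z'xz yx yz by auto
    define q where "q v = (if v = y then z' else if v = z' then y else if v \<in> P then m2 v else m1 v)" for v
    have "pmfun V E q" unfolding pmfun_def
    proof
      fix v assume vV: "v \<in> V"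
      show "q v \<in> V \<and> q v \<noteq> v \<and> q (q v) = v \<and> {v, q v} \<in> E"
      proof (cases "v = y")
        case True thus ?thesis using z'V z'y ey unfolding q_def by auto
      next
        case vy: False
        show ?thesis
        proof (cases "v = z'")
          case True thus ?thesis using yV z'y ey unfolding q_def by (auto simp: insert_commute)
        next
          case vz: False
          show ?thesis
          proof (cases "v \<in> P")
            case True
            have a: "m2 v \<in> P" using F4[OF True] .
            have b: "m2 v \<noteq> y" "m2 v \<noteq> z'" using a F1 F2 by auto
            have c: "v \<noteq> w" using True F3 by auto
            have "{v, m2 v} \<noteq> {y, w}" using vy c by (auto simp: doubleton_eq_iff)
            hence "{v, m2 v} \<in> E" using M2(4)[OF vV] by simp
            thus ?thesis using a b True vy vz M2[OF vV] unfolding q_def by auto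
          next
            case False
            have a: "m1 v \<notin> P" "m1 v \<noteq> y" "m1 v \<noteq> z'" using F5[OF vV False vy vz] by auto
            have "v \<noteq> c" using inP[of n] n1 c_def False by auto
            hence "v \<notin> {x, z}" using vz z'xz cxz by auto
            hence "{v, m1 v} \<noteq> {x, z}" by (auto simp: doubleton_eq_iff)
            hence "{v, m1 v} \<in> E" using M1(4)[OF vV] by simp
            thus ?thesis using a False vy vz M1[OF vV] unfolding q_def by auto
          qed
        qed
      qed
    qed
    thus ?thesis by blast
  next
    case B
    show ?thesis
    proof (cases "snd (s n)")
      case False
      hence snw: "s n = (w, False)" using B by (metis prod.collapse)
      define Q where "Q = {fst (s k) | k. k \<le> n}"
      have inQ: "fst (s k) \<in> Q" if "k \<le> n" for k using that unfolding Q_def by blast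
      have yQ: "y \<in> Q" using inQ[of 0] s0 by simp
      have wQ: "w \<in> Q" using inQ[of n] snw by simp
      have xQ: "x \<notin> Q" and zQ: "z \<notin> Q"
      proof -
        have "fst (s k) \<noteq> x \<and> fst (s k) \<noteq> z" if "k \<le> n" for k
        proof (cases "k < n")
          case True thus ?thesis using nmin[OF True] hit_def by auto
        next
          case False hence "k = n" using that by simp
          thus ?thesis using snw wx wz by simp
        qed
        thus "x \<notin> Q" "z \<notin> Q" unfolding Q_def by auto
      qed
      have cl: "m1 v \<in> Q \<and> m2 v \<in> Q" if vQ: "v \<in> Q" for v
      proof -
        obtain k where k: "k \<le> n" "fst (s k) = v" using vQ unfolding Q_def by auto
        show ?thesis
        proof (cases "snd (s k)")
          case True
          hence sk: "s k = (v, True)" using k by (metis prod.collapse)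
          have "k \<noteq> n" using sk snw by auto
          hence "Suc k \<le> n" using k by simp
          hence a: "m1 v \<in> Q" using inQ[of "Suc k"] sS sk tT by simp
          have b: "m2 v \<in> Q"
          proof (cases "k = 0")
            case True thus ?thesis using sk s0 m2y wQ by simp
          next
            case False
            hence "s (k - 1) = (m2 v, False)" using sback[of k] sk iT by simp
            thus ?thesis using inQ[of "k - 1"] k by simp
          qed
          show ?thesis using a b by simp
        next
          case False
          hence sk: "s k = (v, False)" using k by (metis prod.collapse)
          have a: "m2 v \<in> Q"
          proof (cases "k = n")
            case True thus ?thesis using sk snw m2w yQ by simp
          next
            case False
            hence "Suc k \<le> n" using k by simp
            thus ?thesis using inQ[of "Suc k"] sS sk tF by simp
          qed
          have "k \<noteq> 0"
          proof
            assume "k = 0" thus False using sk s0 by simp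
          qed
          hence "s (k - 1) = (m1 v, True)" using sback[of k] sk iF by simp
          hence b: "m1 v \<in> Q" using inQ[of "k - 1"] k by simp
          show ?thesis using a b by simp
        qed
      qed
      define q where "q v = (if v \<in> Q then m1 v else m2 v)" for v
      have "pmfun V E q" unfolding pmfun_def
      proof
        fix v assume vV: "v \<in> V"
        show "q v \<in> V \<and> q v \<noteq> v \<and> q (q v) = v \<and> {v, q v} \<in> E"
        proof (cases "v \<in> Q")
          case True
          have "v \<notin> {x, z}" using True xQ zQ by auto
          hence "{v, m1 v} \<noteq> {x, z}" by (auto simp: doubleton_eq_iff)
          hence "{v, m1 v} \<in> E" using M1(4)[OF vV] by simp
          thus ?thesis using True cl[OF True] M1[OF vV] unfolding q_def by auto
        next
          case False
          have nq: "m2 v \<notin> Q"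
          proof
            assume "m2 v \<in> Q" hence "m2 (m2 v) \<in> Q" using cl by blast
            thus False using M2(3)[OF vV] False by simp
          qed
          have "v \<notin> {y, w}" using False yQ wQ by auto
          hence "{v, m2 v} \<noteq> {y, w}" by (auto simp: doubleton_eq_iff)
          hence "{v, m2 v} \<in> E" using M2(4)[OF vV] by simp
          thus ?thesis using False nq M2[OF vV] unfolding q_def by auto
        qed
      qed
      thus ?thesis by blast
    next
      case True
      hence snw: "s n = (w, True)" using B by (metis prod.collapse)
      define L where "L = n - 1"
      have sL: "s L = (y, False)" using sback[OF n1] snw iT m2w unfolding L_def by simp
      define rho :: "'a \<times> bool \<Rightarrow> 'a \<times> bool" where "rho u = (fst u, \<not> snd u)" for u
      have comm: "rho (tau u) = taui (rho u)" for u by (simp add: rho_def tau_def taui_def)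
      have refl: "rho (s i) = s (L - i)" if "i \<le> L" for i
        using that
      proof (induct i)
        case 0 thus ?case using s0 sL by (simp add: rho_def)
      next
        case (Suc i)
        have e: "L - i = Suc (L - Suc i)" using Suc.prems by simp
        have "rho (s (Suc i)) = taui (rho (s i))" using sS comm by simp
        also have "\<dots> = taui (s (L - i))" using Suc by simp
        also have "\<dots> = s (L - Suc i)" using e bk[of "L - Suc i"] by simp
        finally show ?case .
      qed
      show ?thesis
      proof (cases "even L")
        case True
        define i where "i = L div 2"
        have "L - i = i" "i \<le> L" using True unfolding i_def by auto
        hence "rho (s i) = s i" using refl by simp
        hence False by (simp add: rho_def prod_eq_iff)
        thus ?thesis ..
      next
        case False
        define i where "i = L div 2"
        have "L - i = Suc i" "i \<le> L" using False unfolding i_def by presburger+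
        hence r: "rho (s i) = tau (s i)" using refl sS by simp
        have vV: "fst (s i) \<in> V" by (rule sV)
        have False
        proof (cases "snd (s i)")
          case True
          thus False using r M1(2)[OF vV] by (simp add: rho_def tau_def prod_eq_iff)
        next
          case False
          thus False using r M2(2)[OF vV] by (simp add: rho_def tau_def prod_eq_iff)
        qed
        thus ?thesis ..
      qed
    qed
  qed
qed



definition wit :: "'a set \<Rightarrow> 'a set set \<Rightarrow> 'a set \<Rightarrow> 'a set set \<Rightarrow> bool" where
  "wit V E S F \<longleftrightarrow> S \<subseteq> V \<and> (\<forall>K1\<in>F. \<forall>K2\<in>F. K1 \<noteq> K2 \<longrightarrow> K1 \<inter> K2 = {}) \<and> \<Union>F = V - S \<and>
     (\<forall>K\<in>F. \<forall>u\<in>K. \<forall>q\<in>V - S. {u,q} \<in> E \<longrightarrow> q \<in> K) \<and> card S < card {K\<in>F. odd (card K)}"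

definition pairs :: "'a set \<Rightarrow> 'a set set" where
  "pairs V = {e. \<exists>u v. e = {u,v} \<and> u \<noteq> v \<and> u \<in> V \<and> v \<in> V}"

lemma pairs_finite: "finite V \<Longrightarrow> finite (pairs V)"
proof -
  assume "finite V"
  moreover have "pairs V \<subseteq> Pow V" unfolding pairs_def by auto
  ultimately show ?thesis by (metis finite_Pow_iff finite_subset)
qed

lemma clique_pairing:
  assumes "finite B" "even (card B)" "\<forall>u\<in>B. \<forall>q\<in>B. u \<noteq> q \<longrightarrow> {u,q} \<in> E"
  shows "\<exists>p. \<forall>v\<in>B. p v \<in> B \<and> p v \<noteq> v \<and> p (p v) = v \<and> {v, p v} \<in> E"
proof -
  obtain p where p: "\<forall>v\<in>B. p v \<in> B \<and> p v \<noteq> v \<and> p (p v) = v" using even_pairing[OF assms(1,2)] by blast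
  hence "\<forall>v\<in>B. p v \<in> B \<and> p v \<noteq> v \<and> p (p v) = v \<and> {v, p v} \<in> E" using assms(3) by metis
  thus ?thesis by blast
qed

lemma cl_case:
  assumes fin: "finite V" and SV: "S \<subseteq> V" and Suniv: "\<forall>s\<in>S. \<forall>u\<in>V. u \<noteq> s \<longrightarrow> {u,s} \<in> E"
    and cliq: "\<forall>K\<in>comps E (V - S). \<forall>u\<in>K. \<forall>q\<in>K. u \<noteq> q \<longrightarrow> {u,q} \<in> E"
    and bound: "card {K \<in> comps E (V - S). odd (card K)} \<le> card S"
    and ev: "even (card V)"
  shows "\<exists>m. pmfun V E m"
proof -
  define C where "C = comps E (V - S)"
  define Od where "Od = {K \<in> C. odd (card K)}"
  have finW: "finite (V - S)" using fin by simp
  have fC: "finite C" unfolding C_def using comps_finite[OF finW] .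
  have fO: "finite Od" using fC unfolding Od_def by simp
  have fS: "finite S" using fin SV finite_subset by blast
  have CW: "K \<subseteq> V - S" if "K \<in> C" for K using that comps_Union[of E "V - S"] unfolding C_def by blast
  have fK: "finite K" if "K \<in> C" for K using CW[OF that] finW finite_subset by blast
  obtain phi where phi: "phi ` Od \<subseteq> S" "inj_on phi Od"
    using card_le_inj[OF fO fS] bound unfolding Od_def C_def by blast
  define blk where "blk K = (if K \<in> Od then insert (phi K) K else K)" for K
  define P where "P = blk ` C \<union> {S - phi ` Od}"
  have OC: "Od \<subseteq> C" unfolding Od_def by auto
  have par: "even (card (V - S)) \<longleftrightarrow> even (card Od)"
    using parity_part[OF finW, of C] comps_disj[of _ E "V - S"] comps_Union[of E "V - S"]
    unfolding Od_def C_def by blast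
  have cV: "card V = card S + card (V - S)" using card_Diff_subset[OF fS SV] card_mono[OF fin SV] by simp
  have cO: "card (phi ` Od) = card Od" using card_image[OF phi(2)] .
  have cSO: "card (S - phi ` Od) = card S - card Od" using card_Diff_subset[OF _ phi(1)] fO cO by simp
  have le: "card Od \<le> card S" using bound unfolding Od_def C_def .
  have evSO: "even (card (S - phi ` Od))" using cSO le par cV ev by presburger
  show ?thesis
  proof (rule glue)
    show "\<forall>B1\<in>P. \<forall>B2\<in>P. B1 \<noteq> B2 \<longrightarrow> B1 \<inter> B2 = {}"
    proof (intro ballI impI)
      fix B1 B2 assume B: "B1 \<in> P" "B2 \<in> P" "B1 \<noteq> B2"
      have blkd: "blk K1 \<inter> blk K2 = {}" if K: "K1 \<in> C" "K2 \<in> C" "K1 \<noteq> K2" for K1 K2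
      proof -
        have d: "K1 \<inter> K2 = {}" using comps_disj K unfolding C_def by blast
        have s1: "K1 \<inter> S = {}" "K2 \<inter> S = {}" using CW K by auto
        have ph: "K1 \<in> Od \<Longrightarrow> phi K1 \<in> S" "K2 \<in> Od \<Longrightarrow> phi K2 \<in> S" using phi(1) by auto
        have ne: "K1 \<in> Od \<Longrightarrow> K2 \<in> Od \<Longrightarrow> phi K1 \<noteq> phi K2" using phi(2) K(3) unfolding inj_on_def by blast
        show ?thesis unfolding blk_def using d s1 ph ne by auto
      qed
      have blkS: "blk K \<inter> (S - phi ` Od) = {}" if K: "K \<in> C" for K
        using CW[OF K] unfolding blk_def by auto
      show "B1 \<inter> B2 = {}"
      proof (cases "B1 = S - phi ` Od")
        case True
        then obtain K where "K \<in> C" "B2 = blk K" using B unfolding P_def by auto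
        thus ?thesis using True blkS by blast
      next
        case F1: False
        then obtain K1 where K1: "K1 \<in> C" "B1 = blk K1" using B unfolding P_def by auto
        show ?thesis
        proof (cases "B2 = S - phi ` Od")
          case True thus ?thesis using K1 blkS by blast
        next
          case False
          then obtain K2 where K2: "K2 \<in> C" "B2 = blk K2" using B unfolding P_def by auto
          have "K1 \<noteq> K2" using K1 K2 B(3) by auto
          thus ?thesis using blkd K1 K2 by blast
        qed
      qed
    qed
    show "\<Union>P = V"
    proof
      show "\<Union>P \<subseteq> V"
      proof
        fix v assume "v \<in> \<Union>P"
        then obtain B where B: "B \<in> P" "v \<in> B" by auto
        show "v \<in> V"
        proof (cases "B = S - phi ` Od")
          case True thus ?thesis using B SV by auto
        next
          case False
          then obtain K where K: "K \<in> C" "B = blk K" using B unfolding P_def by auto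
          thus ?thesis using B CW[OF K(1)] phi(1) SV unfolding blk_def by (auto split: if_splits)
        qed
      qed
      show "V \<subseteq> \<Union>P"
      proof
        fix v assume v: "v \<in> V"
        show "v \<in> \<Union>P"
        proof (cases "v \<in> S")
          case True
          show ?thesis
          proof (cases "v \<in> phi ` Od")
            case True
            then obtain K where K: "K \<in> Od" "v = phi K" by auto
            hence "v \<in> blk K" "blk K \<in> P" using OC unfolding blk_def P_def by auto
            thus ?thesis by blast
          next
            case False
            hence "v \<in> S - phi ` Od" "S - phi ` Od \<in> P" using \<open>v \<in> S\<close> unfolding P_def by auto
            thus ?thesis by blast
          qed
        next
          case False
          hence "v \<in> \<Union>C" using v comps_Union[of E "V - S"] unfolding C_def by auto
          then obtain K where K: "K \<in> C" "v \<in> K" by auto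
          hence "v \<in> blk K" "blk K \<in> P" unfolding blk_def P_def by auto
          thus ?thesis by blast
        qed
      qed
    qed
    show "\<forall>B\<in>P. \<exists>p. \<forall>v\<in>B. p v \<in> B \<and> p v \<noteq> v \<and> p (p v) = v \<and> {v, p v} \<in> E"
    proof
      fix B assume B: "B \<in> P"
      show "\<exists>p. \<forall>v\<in>B. p v \<in> B \<and> p v \<noteq> v \<and> p (p v) = v \<and> {v, p v} \<in> E"
      proof (cases "B = S - phi ` Od")
        case True
        show ?thesis
        proof (rule clique_pairing)
          show "finite B" using True fS by simp
          show "even (card B)" using True evSO by simp
          show "\<forall>u\<in>B. \<forall>q\<in>B. u \<noteq> q \<longrightarrow> {u, q} \<in> E" using True Suniv SV by blast
        qed
      next
        case False
        then obtain K where K: "K \<in> C" "B = blk K" using B unfolding P_def by auto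
        show ?thesis
        proof (cases "K \<in> Od")
          case True
          have pK: "phi K \<in> S" using phi(1) True by auto
          have nK: "phi K \<notin> K" using pK CW[OF K(1)] by auto
          have Bd: "B = insert (phi K) K" using K True unfolding blk_def by simp
          show ?thesis
          proof (rule clique_pairing)
            show "finite B" using Bd fK[OF K(1)] by simp
            show "even (card B)" using Bd nK fK[OF K(1)] True unfolding Od_def by simp
            show "\<forall>u\<in>B. \<forall>q\<in>B. u \<noteq> q \<longrightarrow> {u, q} \<in> E"
            proof (intro ballI impI)
              fix u q assume uq: "u \<in> B" "q \<in> B" "u \<noteq> q"
              have KV: "K \<subseteq> V" using CW[OF K(1)] by auto
              show "{u, q} \<in> E"
              proof (cases "u = phi K")
                case True
                hence "q \<in> K" using uq Bd by auto
                hence "q \<in> V" "q \<noteq> phi K" using KV True uq(3) by auto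
                hence "{q, phi K} \<in> E" using Suniv pK by blast
                thus ?thesis using True by (simp add: insert_commute)
              next
                case False
                hence u: "u \<in> K" using uq Bd by auto
                show ?thesis
                proof (cases "q = phi K")
                  case True thus ?thesis using Suniv pK KV u uq(3) by auto
                next
                  case False
                  hence "q \<in> K" using uq Bd by auto
                  thus ?thesis using cliq u uq(3) K(1) unfolding C_def by blast
                qed
              qed
            qed
          qed
        next
          case False
          have Bd: "B = K" using K False unfolding blk_def by simp
          show ?thesis
          proof (rule clique_pairing)
            show "finite B" using Bd fK[OF K(1)] by simp
            show "even (card B)" using Bd False K(1) unfolding Od_def by simp
            show "\<forall>u\<in>B. \<forall>q\<in>B. u \<noteq> q \<longrightarrow> {u, q} \<in> E" using cliq Bd K(1) unfolding C_def by blast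
          qed
        qed
      qed
    qed
  qed
qed

lemma p3:
  assumes "reachable (ew E W) u q"
  shows "q = u \<or> {u,q} \<in> E \<or> (\<exists>y z. {u,y} \<in> E \<and> {y,z} \<in> E \<and> {u,z} \<notin> E \<and> u \<noteq> z \<and> y \<in> W \<and> z \<in> W)"
  using assms
proof induct
  case refl thus ?case by simp
next
  case (step u v w)
  have e: "{v,w} \<in> E" "v \<in> W" "w \<in> W" using step(3) unfolding ew_def by auto
  show ?case
  proof (cases "v = u")
    case True thus ?thesis using e by simp
  next
    case False
    show ?thesis
    proof (cases "{u,v} \<in> E")
      case True
      show ?thesis
      proof (cases "w = u \<or> {u,w} \<in> E")
        case True thus ?thesis by auto
      next
        case False
        hence "{u,v} \<in> E \<and> {v,w} \<in> E \<and> {u,w} \<notin> E \<and> u \<noteq> w \<and> v \<in> W \<and> w \<in> W" using True e by auto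
        thus ?thesis by blast
      qed
    next
      case False
      thus ?thesis using step(2) \<open>v \<noteq> u\<close> by auto
    qed
  qed
qed



lemma wit_mono: "wit V (insert e E) S F \<Longrightarrow> wit V E S F"
  unfolding wit_def
proof (elim conjE, intro conjI)
  assume cl: "\<forall>K\<in>F. \<forall>u\<in>K. \<forall>q\<in>V - S. {u, q} \<in> insert e E \<longrightarrow> q \<in> K"
  show "\<forall>K\<in>F. \<forall>u\<in>K. \<forall>q\<in>V - S. {u, q} \<in> E \<longrightarrow> q \<in> K"
  proof (intro ballI impI)
    fix K u q assume "K \<in> F" "u \<in> K" "q \<in> V - S" "{u,q} \<in> E"
    thus "q \<in> K" using cl by blast
  qed
qed

lemma comps_disj': "\<forall>K1\<in>comps E W. \<forall>K2\<in>comps E W. K1 \<noteq> K2 \<longrightarrow> K1 \<inter> K2 = {}"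
  by (intro ballI impI, rule comps_disj)
lemma comps_closed': "\<forall>K\<in>comps E W. \<forall>u\<in>K. \<forall>q\<in>W. {u,q} \<in> E \<longrightarrow> q \<in> K"
  by (intro ballI impI, rule comps_closed)

theorem tutte:
  assumes "finite V" "\<not> (\<exists>S F. wit V E S F)"
  shows "\<exists>m. pmfun V E m"
  using assms
proof (induct "card (pairs V - E)" arbitrary: E rule: less_induct)
  case (less E)
  have fin: "finite V" and nw: "\<not> (\<exists>S F. wit V E S F)" using less.prems by auto
  show ?case
  proof (rule ccontr)
    assume noPM: "\<not> (\<exists>m. pmfun V E m)"
    have IH: "\<exists>m. pmfun V (insert e E) m" if e: "e \<in> pairs V" "e \<notin> E" for e
    proof (rule less.hyps)
      have eq: "pairs V - insert e E = (pairs V - E) - {e}" by auto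
      have em: "e \<in> pairs V - E" using e by simp
      have ff: "finite (pairs V - E)" using pairs_finite[OF fin] by simp
      show "card (pairs V - insert e E) < card (pairs V - E)"
        unfolding eq by (rule card_Diff1_less[OF ff em])
      show "finite V" by (rule fin)
      show "\<not> (\<exists>S F. wit V (insert e E) S F)"
      proof
        assume "\<exists>S F. wit V (insert e E) S F"
        then obtain S F where "wit V (insert e E) S F" by blast
        hence "wit V E S F" by (rule wit_mono)
        thus False using nw by blast
      qed
    qed
    have bound: "card {K \<in> comps E (V - S). odd (card K)} \<le> card S" if SV: "S \<subseteq> V" for S
    proof (rule ccontr)
      assume "\<not> ?thesis"
      hence c: "card S < card {K \<in> comps E (V - S). odd (card K)}" by simp
      have d: "\<forall>K1\<in>comps E (V - S). \<forall>K2\<in>comps E (V - S). K1 \<noteq> K2 \<longrightarrow> K1 \<inter> K2 = {}"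
        by (rule comps_disj')
      have cl: "\<forall>K\<in>comps E (V - S). \<forall>u\<in>K. \<forall>q\<in>V - S. {u,q} \<in> E \<longrightarrow> q \<in> K"
        by (rule comps_closed')
      have "wit V E S (comps E (V - S))"
        unfolding wit_def using SV d cl c comps_Union[of E "V - S"] by blast
      thus False using nw by blast
    qed
    have ev: "even (card V)"
    proof -
      have "card {K \<in> comps E (V - {}). odd (card K)} = 0" using bound[of "{}"] by simp
      moreover have "even (card (V - {})) \<longleftrightarrow> even (card {K \<in> comps E (V - {}). odd (card K)})"
      proof (rule parity_part)
        show "finite (V - {})" using fin by simp
        show "\<forall>K1\<in>comps E (V - {}). \<forall>K2\<in>comps E (V - {}). K1 \<noteq> K2 \<longrightarrow> K1 \<inter> K2 = {}"
          by (rule comps_disj')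
        show "\<Union>(comps E (V - {})) = V - {}" by (rule comps_Union)
      qed
      ultimately show ?thesis by simp
    qed
    define S where "S = {v\<in>V. \<forall>u\<in>V. u \<noteq> v \<longrightarrow> {u,v} \<in> E}"
    have SV: "S \<subseteq> V" unfolding S_def by auto
    have Suniv: "\<forall>s\<in>S. \<forall>u\<in>V. u \<noteq> s \<longrightarrow> {u,s} \<in> E" unfolding S_def by auto
    show False
    proof (cases "\<forall>K\<in>comps E (V - S). \<forall>u\<in>K. \<forall>q\<in>K. u \<noteq> q \<longrightarrow> {u,q} \<in> E")
      case True
      have "\<exists>m. pmfun V E m" using cl_case[OF fin SV Suniv True bound[OF SV] ev] .
      thus False using noPM by blast
    next
      case False
      then obtain K u q where K: "K \<in> comps E (V - S)" "u \<in> K" "q \<in> K" "u \<noteq> q" "{u,q} \<notin> E" by blast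
      obtain r where r: "r \<in> V - S" "K = compo E (V - S) r" using K(1) unfolding comps_def by auto
      have ru: "reachable (ew E (V - S)) r u" and rq: "reachable (ew E (V - S)) r q"
        using K(2,3) r(2) unfolding compo_def by auto
      have uq: "reachable (ew E (V - S)) u q" using reach_trans[OF rq reach_sym[OF ru]] .
      have uW: "u \<in> V - S" using compo_sub[OF r(1)] K(2) r(2) by blast
      obtain y z where yz: "{u,y} \<in> E" "{y,z} \<in> E" "{u,z} \<notin> E" "u \<noteq> z" "y \<in> V - S" "z \<in> V - S"
        using p3[OF uq] K(4,5) by auto
      have "y \<notin> S" using yz by simp
      then obtain w where w: "w \<in> V" "w \<noteq> y" "{w,y} \<notin> E" using yz(5) unfolding S_def by auto
      have uV: "u \<in> V" and yV: "y \<in> V" and zV: "z \<in> V" using uW yz by auto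
      have "{u,z} \<in> pairs V" using uV zV yz(4) unfolding pairs_def by blast
      then obtain m1 where m1: "pmfun V (insert {u,z} E) m1" using IH yz(3) by blast
      have "{y,w} \<in> pairs V" using yV w(1,2) unfolding pairs_def by blast
      moreover have "{y,w} \<notin> E" using w(3) by (simp add: insert_commute)
      ultimately obtain m2 where m2: "pmfun V (insert {y,w} E) m2" using IH by blast
      have m1u: "m1 u = z"
      proof (rule ccontr)
        assume a: "m1 u \<noteq> z"
        have "pmfun V E m1" unfolding pmfun_def
        proof
          fix v assume vV: "v \<in> V"
          have M: "m1 v \<in> V" "m1 v \<noteq> v" "m1 (m1 v) = v" "{v, m1 v} \<in> insert {u,z} E"
            using m1 vV unfolding pmfun_def by auto
          have "{v, m1 v} \<noteq> {u, z}"
          proof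
            assume "{v, m1 v} = {u, z}"
            hence "(v = u \<and> m1 v = z) \<or> (v = z \<and> m1 v = u)" by (auto simp: doubleton_eq_iff)
            thus False using a M(3) by auto
          qed
          thus "m1 v \<in> V \<and> m1 v \<noteq> v \<and> m1 (m1 v) = v \<and> {v, m1 v} \<in> E" using M by auto
        qed
        thus False using noPM by blast
      qed
      have m2y: "m2 y = w"
      proof (rule ccontr)
        assume a: "m2 y \<noteq> w"
        have "pmfun V E m2" unfolding pmfun_def
        proof
          fix v assume vV: "v \<in> V"
          have M: "m2 v \<in> V" "m2 v \<noteq> v" "m2 (m2 v) = v" "{v, m2 v} \<in> insert {y,w} E"
            using m2 vV unfolding pmfun_def by auto
          have "{v, m2 v} \<noteq> {y, w}"
          proof
            assume "{v, m2 v} = {y, w}"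
            hence "(v = y \<and> m2 v = w) \<or> (v = w \<and> m2 v = y)" by (auto simp: doubleton_eq_iff)
            thus False using a M(3) by auto
          qed
          thus "m2 v \<in> V \<and> m2 v \<noteq> v \<and> m2 (m2 v) = v \<and> {v, m2 v} \<in> E" using M by auto
        qed
        thus False using noPM by blast
      qed
      have yu: "y \<noteq> u" using yz(2,3) by auto
      have yz': "y \<noteq> z" using yz(1,3) by auto
      have wu: "w \<noteq> u" using w(3) yz(1) by (auto simp: insert_commute)
      have wz: "w \<noteq> z" using w(3) yz(2) by (auto simp: insert_commute)
      have "\<exists>m. pmfun V E m"
        by (rule alt[OF m1 m2 uV yV zV w(1) m1u m2y yz(1) yz(2) yu yz' wu wz fin])
      thus False using noPM by blast
    qed
  qed
qed



lemma edge_form: "graph V E \<Longrightarrow> e \<in> E \<Longrightarrow> v \<in> e \<Longrightarrow> \<exists>a. e = {v,a} \<and> a \<noteq> v \<and> a \<in> V \<and> v \<in> V"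
  unfolding graph_def by (metis empty_iff insert_commute insert_iff)

lemma doubleton_same: "{u, a} = {u, b} \<Longrightarrow> a = b"
  by (auto simp: doubleton_eq_iff)

lemma set_to_fun:
  assumes g: "graph V E" and pm: "perfect_matching V E M"
  shows "\<exists>m. pmfun V E m \<and> (\<forall>u\<in>V. {u, m u} \<in> M) \<and> (\<forall>u\<in>V. \<forall>q. {u,q} \<in> M \<longrightarrow> q = m u)
            \<and> (\<forall>e\<in>M. \<exists>u\<in>V. e = {u, m u})"
proof -
  have ME: "M \<subseteq> E" using pm unfolding perfect_matching_def by simp
  have deg: "card {e\<in>M. u \<in> e} = 1" if "u \<in> V" for u
    using pm that unfolding perfect_matching_def degree_def by simp
  have ex1: "\<exists>!q. {u,q} \<in> M" if u: "u \<in> V" for u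
  proof -
    obtain e0 where e0: "{e\<in>M. u \<in> e} = {e0}" using deg[OF u] by (metis card_1_singletonE)
    hence e0M: "e0 \<in> M" "u \<in> e0" by auto
    then obtain a where a: "e0 = {u,a}" using edge_form[OF g] ME by blast
    show ?thesis
    proof
      show "{u,a} \<in> M" using e0M a by simp
      fix q assume "{u,q} \<in> M"
      hence "{u,q} \<in> {e\<in>M. u \<in> e}" by simp
      hence "{u,q} = {u,a}" using e0 a by simp
      thus "q = a" by (rule doubleton_same)
    qed
  qed
  define m where "m u = (THE q. {u,q} \<in> M)" for u
  have mM: "{u, m u} \<in> M" if "u \<in> V" for u
    using theI'[OF ex1[OF that]] unfolding m_def .
  have muniq: "q = m u" if "u \<in> V" "{u,q} \<in> M" for u q
    using ex1[OF that(1)] that(2) mM[OF that(1)] by blast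
  have mV: "m u \<in> V \<and> m u \<noteq> u" if "u \<in> V" for u
  proof -
    have "{u, m u} \<in> E" using mM[OF that] ME by auto
    then obtain x y where "{u, m u} = {x, y}" "x \<noteq> y" "x \<in> V" "y \<in> V" using g unfolding graph_def by blast
    thus ?thesis by (auto simp: doubleton_eq_iff)
  qed
  have mm: "m (m u) = u" if "u \<in> V" for u
  proof -
    have "{m u, u} \<in> M" using mM[OF that] by (simp add: insert_commute)
    thus ?thesis using muniq mV that by metis
  qed
  have "pmfun V E m" unfolding pmfun_def using mV mm mM ME by auto
  moreover have "\<forall>e\<in>M. \<exists>u\<in>V. e = {u, m u}"
  proof
    fix e assume e: "e \<in> M"
    then obtain x y where xy: "e = {x, y}" "x \<noteq> y" "x \<in> V" "y \<in> V" using g ME unfolding graph_def by blast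
    hence "y = m x" using muniq e by simp
    thus "\<exists>u\<in>V. e = {u, m u}" using xy by blast
  qed
  ultimately show ?thesis using mM muniq by blast
qed

lemma exit_edge:
  assumes "reachable E u q" shows "u \<in> K \<Longrightarrow> q \<notin> K \<Longrightarrow> \<exists>p r. {p,r} \<in> E \<and> p \<in> K \<and> r \<notin> K"
  using assms
proof induct
  case refl thus ?case by simp
next
  case (step u v w)
  show ?case
  proof (cases "v \<in> K")
    case True thus ?thesis using step by blast
  next
    case False thus ?thesis using step by blast
  qed
qed

lemma barrier_match:
  assumes fin: "finite V" and BV: "B \<subseteq> V"
    and disj: "\<forall>K1\<in>F. \<forall>K2\<in>F. K1 \<noteq> K2 \<longrightarrow> K1 \<inter> K2 = {}" and un: "\<Union>F = V - B"
    and cl: "\<forall>K\<in>F. \<forall>u\<in>K. \<forall>q\<in>V - B. {u,q} \<in> E \<longrightarrow> q \<in> K"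
    and big: "card B \<le> card {K\<in>F. odd (card K)}"
    and m: "pmfun V E m"
  shows "(\<forall>b\<in>B. m b \<notin> B) \<and> (\<forall>K\<in>F. odd (card K) \<longrightarrow> (\<exists>u\<in>K. m u \<notin> K))
    \<and> (\<forall>K\<in>F. odd (card K) \<longrightarrow> (\<forall>u\<in>K. \<forall>u'\<in>K. m u \<notin> K \<longrightarrow> m u' \<notin> K \<longrightarrow> u = u'))
    \<and> (\<forall>K\<in>F. even (card K) \<longrightarrow> (\<forall>u\<in>K. m u \<in> K))"
proof -
  have M: "m v \<in> V" "m v \<noteq> v" "m (m v) = v" "{v, m v} \<in> E" if "v \<in> V" for v
    using m that unfolding pmfun_def by auto
  have fFU: "finite (\<Union>F)" using fin un by simp
  have fF: "finite F" using finite_UnionD[OF fFU] .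
  have KV: "K \<subseteq> V - B" if "K \<in> F" for K using that un by blast
  have fK: "finite K" if "K \<in> F" for K using KV[OF that] fin finite_subset by blast
  have fB: "finite B" using fin BV finite_subset by blast
  define Od where "Od = {K\<in>F. odd (card K)}"
  define out where "out K = {u\<in>K. m u \<notin> K}" for K
  have outB: "m u \<in> B" if "K \<in> F" "u \<in> out K" for K u
  proof (rule ccontr)
    assume a: "m u \<notin> B"
    have uK: "u \<in> K" "m u \<notin> K" using that(2) unfolding out_def by auto
    have uV: "u \<in> V" using KV[OF that(1)] uK by auto
    have "m u \<in> V - B" using M(1)[OF uV] a by simp
    hence "m u \<in> K" using cl that(1) uK(1) M(4)[OF uV] by blast
    thus False using uK by simp
  qed
  have outne: "out K \<noteq> {}" if "K \<in> Od" for K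
  proof
    assume a: "out K = {}"
    have KF: "K \<in> F" using that unfolding Od_def by simp
    have "\<forall>x\<in>K. m x \<in> K \<and> m x \<noteq> x \<and> m (m x) = x"
    proof
      fix x assume x: "x \<in> K"
      have xV: "x \<in> V" using KV[OF KF] x by auto
      have "m x \<in> K" using a x unfolding out_def by auto
      thus "m x \<in> K \<and> m x \<noteq> x \<and> m (m x) = x" using M[OF xV] by simp
    qed
    hence "even (card K)" using even_card_inv fK[OF KF] by blast
    thus False using that unfolding Od_def by simp
  qed
  have fOd: "finite Od" using fF unfolding Od_def by simp
  define T where "T = \<Union>(out ` Od)"
  have TV: "T \<subseteq> V - B" unfolding T_def out_def Od_def using KV by blast
  have mTB: "m ` T \<subseteq> B"
  proof
    fix x assume "x \<in> m ` T"
    then obtain u K where "K \<in> Od" "u \<in> out K" "x = m u" unfolding T_def by auto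
    thus "x \<in> B" using outB unfolding Od_def by auto
  qed
  have injT: "inj_on m T"
  proof (rule inj_onI)
    fix a b assume "a \<in> T" "b \<in> T" "m a = m b"
    hence "m (m a) = m (m b)" "a \<in> V" "b \<in> V" using TV by auto
    thus "a = b" using M(3) by metis
  qed
  have cT: "card T \<le> card B" using card_image[OF injT] card_mono[OF fB mTB] by simp
  have fout: "finite (out K)" if "K \<in> Od" for K using fK that unfolding out_def Od_def by auto
  have outdisj: "\<forall>i\<in>Od. \<forall>j\<in>Od. i \<noteq> j \<longrightarrow> out i \<inter> out j = {}"
    using disj unfolding out_def Od_def by blast
  have sumT: "card T = (\<Sum>K\<in>Od. card (out K))"
    unfolding T_def by (rule card_UN_disjoint[OF fOd]) (use fout outdisj in auto)
  have ge1: "card (out K) \<ge> 1" if "K \<in> Od" for K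
    using outne[OF that] fout[OF that] by (simp add: Suc_le_eq card_gt_0_iff)
  have sumge: "(\<Sum>K\<in>Od. card (out K)) \<ge> card Od"
  proof -
    have "(\<Sum>K\<in>Od. (1::nat)) \<le> (\<Sum>K\<in>Od. card (out K))" by (rule sum_mono) (use ge1 in auto)
    thus ?thesis by simp
  qed
  have bigO: "card B \<le> card Od" using big unfolding Od_def .
  have one: "card (out K) = 1" if K0: "K \<in> Od" for K
  proof (rule ccontr)
    assume "card (out K) \<noteq> 1"
    hence c2: "card (out K) \<ge> 2" using ge1[OF K0] by simp
    have "(\<Sum>K\<in>Od. card (out K)) = card (out K) + (\<Sum>K\<in>Od - {K}. card (out K))"
      using sum.remove[OF fOd K0] .
    moreover have "(\<Sum>K\<in>Od - {K}. (1::nat)) \<le> (\<Sum>K\<in>Od - {K}. card (out K))"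
      by (rule sum_mono) (use ge1 in auto)
    moreover have "(\<Sum>K\<in>Od - {K}. (1::nat)) = card Od - 1" using K0 fOd by simp
    moreover have "card Od \<ge> 1" using K0 fOd by (metis One_nat_def Suc_leI card_gt_0_iff empty_iff)
    ultimately have "card T \<ge> card Od + 1" using sumT c2 by linarith
    thus False using cT bigO by linarith
  qed
  have cTB: "card (m ` T) = card B"
  proof -
    have "card T \<ge> card B" using sumT sumge bigO by linarith
    thus ?thesis using cT card_image[OF injT] by simp
  qed
  have mTeq: "m ` T = B" using card_subset_eq[OF fB mTB cTB] .
  show ?thesis
  proof (intro conjI)
    show "\<forall>b\<in>B. m b \<notin> B"
    proof
      fix b assume b: "b \<in> B"
      then obtain t where t: "t \<in> T" "b = m t" using mTeq by blast
      have "t \<in> V" using TV t by auto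
      hence "m b = t" using t M(3) by simp
      thus "m b \<notin> B" using t TV by auto
    qed
    show "\<forall>K\<in>F. odd (card K) \<longrightarrow> (\<exists>u\<in>K. m u \<notin> K)"
      using outne unfolding Od_def out_def by blast
    show "\<forall>K\<in>F. odd (card K) \<longrightarrow> (\<forall>u\<in>K. \<forall>u'\<in>K. m u \<notin> K \<longrightarrow> m u' \<notin> K \<longrightarrow> u = u')"
    proof (intro ballI impI)
      fix K u u' assume a: "K \<in> F" "odd (card K)" "u \<in> K" "u' \<in> K" "m u \<notin> K" "m u' \<notin> K"
      have "K \<in> Od" using a unfolding Od_def by simp
      hence "card (out K) = 1" by (rule one)
      then obtain x where "out K = {x}" by (metis card_1_singletonE)
      moreover have "u \<in> out K" "u' \<in> out K" using a unfolding out_def by auto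
      ultimately show "u = u'" by simp
    qed
    show "\<forall>K\<in>F. even (card K) \<longrightarrow> (\<forall>u\<in>K. m u \<in> K)"
    proof (intro ballI impI)
      fix K u assume a: "K \<in> F" "even (card K)" "u \<in> K"
      show "m u \<in> K"
      proof (rule ccontr)
        assume nk: "m u \<notin> K"
        hence "m u \<in> B" using outB[OF a(1)] a(3) unfolding out_def by auto
        then obtain t where t: "t \<in> T" "m u = m t" using mTeq by (metis imageE)
        have uV: "u \<in> V" using KV a by auto
        have tV: "t \<in> V" using TV t by auto
        have "u = t" using t M(3)[OF uV] M(3)[OF tV] by metis
        then obtain K' where K': "K' \<in> Od" "u \<in> out K'" using t unfolding T_def by auto
        have "K' \<in> F" "u \<in> K'" using K' unfolding Od_def out_def by auto
        hence "K' = K" using disj a by blast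
        thus False using K' a unfolding Od_def by simp
      qed
    qed
  qed
qed



lemma barrier:
  assumes g: "graph V E" and mc: "matching_covered V E" and nb: "\<not> bipartite V E"
    and nt: "\<not> (\<exists>X. nontrivial_shore V X \<and> tight_cut V E X)"
    and BV: "B \<subseteq> V" and B2: "card B \<ge> 2"
    and disj: "\<forall>K1\<in>F. \<forall>K2\<in>F. K1 \<noteq> K2 \<longrightarrow> K1 \<inter> K2 = {}" and un: "\<Union>F = V - B"
    and cl: "\<forall>K\<in>F. \<forall>u\<in>K. \<forall>q\<in>V - B. {u,q} \<in> E \<longrightarrow> q \<in> K"
    and big: "card B \<le> card {K\<in>F. odd (card K)}"
  shows False
proof -
  have fin: "finite V" using g unfolding graph_def by simp
  have conn: "\<forall>u\<in>V. \<forall>v\<in>V. reachable E u v" using mc unfolding matching_covered_def connected_graph_def by simp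
  have cov: "\<forall>e\<in>E. \<exists>M. perfect_matching V E M \<and> e \<in> M" using mc unfolding matching_covered_def by simp
  note bm = barrier_match[OF fin BV disj un cl big]
  have KV: "K \<subseteq> V - B" if "K \<in> F" for K using that un by blast
  have T1: "card K \<le> 1" if K: "K \<in> F" "odd (card K)" for K
  proof (rule ccontr)
    assume "\<not> card K \<le> 1"
    hence c2: "card K \<ge> 2" by simp
    have "B \<subseteq> V - K" using KV[OF K(1)] BV by auto
    hence "card B \<le> card (V - K)" using fin by (simp add: card_mono)
    hence ns: "nontrivial_shore V K" unfolding nontrivial_shore_def using KV[OF K(1)] c2 B2 by auto
    have tc: "tight_cut V E K" unfolding tight_cut_def
    proof (intro conjI allI impI)
      show "K \<subseteq> V" using KV[OF K(1)] by auto
      fix M assume pm: "perfect_matching V E M"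
      obtain m where m: "pmfun V E m" "\<forall>u\<in>V. {u, m u} \<in> M" "\<forall>u\<in>V. \<forall>q. {u,q} \<in> M \<longrightarrow> q = m u"
        "\<forall>e\<in>M. \<exists>u\<in>V. e = {u, m u}"
        using set_to_fun[OF g pm] by blast
      have M: "m v \<in> V" "m v \<noteq> v" "m (m v) = v" "{v, m v} \<in> E" if "v \<in> V" for v
        using m(1) that unfolding pmfun_def by auto
      have b: "(\<exists>u\<in>K. m u \<notin> K)" "\<forall>u\<in>K. \<forall>u'\<in>K. m u \<notin> K \<longrightarrow> m u' \<notin> K \<longrightarrow> u = u'"
        using bm[OF m(1)] K by auto
      then obtain u0 where u0: "u0 \<in> K" "m u0 \<notin> K" by blast
      have u0V: "u0 \<in> V" using KV[OF K(1)] u0 by auto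
      have ME: "M \<subseteq> E" using pm unfolding perfect_matching_def by simp
      have "cut E K \<inter> M = {{u0, m u0}}"
      proof
        show "cut E K \<inter> M \<subseteq> {{u0, m u0}}"
        proof
          fix e assume e: "e \<in> cut E K \<inter> M"
          then obtain u where u: "u \<in> V" "e = {u, m u}" using m(4) by blast
          have c1: "card (e \<inter> K) = 1" using e unfolding cut_def by simp
          have mu: "m u \<in> V" "m u \<noteq> u" "m (m u) = u" using M[OF u(1)] by auto
          show "e \<in> {{u0, m u0}}"
          proof (cases "u \<in> K")
            case True
            show ?thesis
            proof (cases "m u \<in> K")
              case True
              hence "e \<inter> K = {u, m u}" using \<open>u \<in> K\<close> u(2) by auto
              thus ?thesis using c1 mu(2) by simp
            next
              case False
              hence "u = u0" using b(2) \<open>u \<in> K\<close> u0 by blast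
              thus ?thesis using u(2) by simp
            qed
          next
            case False
            show ?thesis
            proof (cases "m u \<in> K")
              case True
              have "m (m u) \<notin> K" using mu(3) False by simp
              hence "m u = u0" using b(2) True u0 by blast
              hence "u = m u0" using mu(3) by metis
              thus ?thesis using u(2) \<open>m u = u0\<close> by (auto simp: insert_commute)
            next
              case F2: False
              hence "e \<inter> K = {}" using False u(2) by auto
              thus ?thesis using c1 by simp
            qed
          qed
        qed
        show "{{u0, m u0}} \<subseteq> cut E K \<inter> M"
        proof -
          have inM: "{u0, m u0} \<in> M" using m(2) u0V by blast
          have "{u0, m u0} \<inter> K = {u0}" using u0 by auto
          thus ?thesis using inM ME unfolding cut_def by auto
        qed
      qed
      thus "card (cut E K \<inter> M) = 1" by simp
    qed
    show False using nt ns tc by blast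
  qed
  have T2: False if K: "K \<in> F" "even (card K)" "u \<in> K" for K u
  proof -
    have "B \<noteq> {}" using B2 by auto
    then obtain b where b: "b \<in> B" by blast
    have uV: "u \<in> V" using KV[OF K(1)] K(3) by auto
    have bV: "b \<in> V" using b BV by auto
    have "reachable E u b" using conn uV bV by simp
    moreover have "b \<notin> K" using KV[OF K(1)] b by auto
    ultimately have "\<exists>p r. {p,r} \<in> E \<and> p \<in> K \<and> r \<notin> K" using exit_edge[of E u b K] K(3) by simp
    then obtain p r where pr: "{p,r} \<in> E" "p \<in> K" "r \<notin> K" by blast
    have "\<exists>a. {p,r} = {p,a} \<and> a \<noteq> p \<and> a \<in> V \<and> p \<in> V" using edge_form[OF g pr(1), of p] by simp
    then obtain a' where a': "{p,r} = {p,a'}" "a' \<in> V" by blast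
    have rV: "r \<in> V" using doubleton_same[OF a'(1)] a'(2) by simp
    have rB: "r \<in> B"
    proof (rule ccontr)
      assume "r \<notin> B" hence "r \<in> V - B" using rV by simp
      hence "r \<in> K" using cl K(1) pr(1,2) by simp
      thus False using pr by simp
    qed
    obtain M where M: "perfect_matching V E M" "{p,r} \<in> M" using cov pr(1) by blast
    obtain m where m: "pmfun V E m" "\<forall>u\<in>V. \<forall>q. {u,q} \<in> M \<longrightarrow> q = m u"
      using set_to_fun[OF g M(1)] by blast
    have pV: "p \<in> V" using KV[OF K(1)] pr by auto
    have "r = m p" using m(2) pV M(2) by blast
    moreover have "m p \<in> K"
    proof -
      have "\<forall>K\<in>F. even (card K) \<longrightarrow> (\<forall>u\<in>K. m u \<in> K)" using bm[OF m(1)] by (elim conjE)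
      thus ?thesis using K pr(2) by simp
    qed
    ultimately show False using pr by simp
  qed
  have "bipartite V E" unfolding bipartite_def
  proof (intro exI ballI)
    fix e assume e: "e \<in> E"
    then obtain p q where pq: "e = {p,q}" "p \<noteq> q" "p \<in> V" "q \<in> V" using g unfolding graph_def by blast
    obtain M where M: "perfect_matching V E M" "e \<in> M" using cov e by blast
    obtain m where m: "pmfun V E m" "\<forall>u\<in>V. \<forall>q. {u,q} \<in> M \<longrightarrow> q = m u"
      using set_to_fun[OF g M(1)] by blast
    have "{p,q} \<in> M" using pq M(2) by simp
    hence mpq: "m p = q" using m(2) pq(3) by simp
    have a: "\<forall>b\<in>B. m b \<notin> B" using bm[OF m(1)] by (elim conjE)
    show "card (e \<inter> B) = 1"
    proof (cases "p \<in> B")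
      case True
      hence "q \<notin> B" using a mpq by auto
      hence "e \<inter> B = {p}" using True pq by auto
      thus ?thesis by simp
    next
      case False
      show ?thesis
      proof (cases "q \<in> B")
        case True
        hence "e \<inter> B = {q}" using False pq by auto
        thus ?thesis by simp
      next
        case qB: False
        have "p \<in> \<Union>F" using un pq(3) False by simp
        then obtain K where K: "K \<in> F" "p \<in> K" by blast
        have "q \<in> V - B" using pq qB by simp
        moreover have "{p,q} \<in> E" using e pq by simp
        ultimately have "q \<in> K" using cl K by simp
        show ?thesis
        proof (cases "odd (card K)")
          case True
          have fK: "finite K" using KV[OF K(1)] fin finite_subset by blast
          have "{p,q} \<subseteq> K" using K \<open>q \<in> K\<close> by auto
          hence "card {p,q} \<le> card K" using fK by (simp add: card_mono)
          hence "card K \<ge> 2" using pq(2) by simp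
          thus ?thesis using T1[OF K(1) True] by simp
        next
          case False
          thus ?thesis using T2[OF K(1) _ K(2)] by simp
        qed
      qed
    qed
  qed
  thus False using nb by simp
qed



theorem proposition1p17:
  fixes V :: "'a set" and E :: "'a set set"
  assumes "cubic V E" and "brick V E"
  shows "(\<forall>v\<in>V. lambda_matchable V E v) \<and> lambda V E = card V"
proof -
  have g: "graph V E" and deg3: "\<forall>v\<in>V. degree E v = 3" using assms(1) unfolding cubic_def by auto
  have mc: "matching_covered V E" and nb: "\<not> bipartite V E"
    and nt: "\<not> (\<exists>X. nontrivial_shore V X \<and> tight_cut V E X)"
    using assms(2) unfolding brick_def by auto
  have fin: "finite V" using g unfolding graph_def by simp
  have cov: "\<forall>e\<in>E. \<exists>M. perfect_matching V E M \<and> e \<in> M" and Ene: "E \<noteq> {}"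
    using mc unfolding matching_covered_def by auto
  have evV: "even (card V)"
  proof -
    obtain e where "e \<in> E" using Ene by blast
    then obtain M where M: "perfect_matching V E M" using cov by blast
    obtain m where m: "pmfun V E m" using set_to_fun[OF g M] by blast
    have "\<forall>x\<in>V. m x \<in> V \<and> m x \<noteq> x \<and> m (m x) = x" using m unfolding pmfun_def by auto
    thus ?thesis using even_card_inv[OF fin] by blast
  qed
  have lm: "lambda_matchable V E v" if vV: "v \<in> V" for v
  proof -
    have "card {e\<in>E. v \<in> e} = 3" using deg3 vV unfolding degree_def by simp
    then obtain e1 e2 e3 where es: "{e\<in>E. v \<in> e} = {e1,e2,e3}" "e1 \<noteq> e2" "e2 \<noteq> e3" "e1 \<noteq> e3"
      unfolding card_3_iff by blast
    have inE: "e1 \<in> E \<and> v \<in> e1" "e2 \<in> E \<and> v \<in> e2" "e3 \<in> E \<and> v \<in> e3"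
      using es(1) by (blast, blast, blast)
    obtain a where a: "e1 = {v,a}" "a \<noteq> v" "a \<in> V" using edge_form[OF g] inE(1) by blast
    obtain b where b: "e2 = {v,b}" "b \<noteq> v" "b \<in> V" using edge_form[OF g] inE(2) by blast
    obtain c where c: "e3 = {v,c}" "c \<noteq> v" "c \<in> V" using edge_form[OF g] inE(3) by blast
    have ab: "a \<noteq> b" using es(2) a b by auto
    have bc: "b \<noteq> c" using es(3) b c by auto
    have ac: "a \<noteq> c" using es(4) a c by auto
    have star: "e = {v,a} \<or> e = {v,b} \<or> e = {v,c}" if "e \<in> E" "v \<in> e" for e
    proof -
      have "e \<in> {e1,e2,e3}" using es(1) that by blast
      thus ?thesis using a b c by auto
    qed
    define V' where "V' = V - {a,b}"
    define E' where "E' = {e\<in>E. e \<subseteq> V'}"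
    have finV': "finite V'" using fin unfolding V'_def by simp
    have "\<exists>m. pmfun V' E' m"
    proof (rule tutte[OF finV'])
      show "\<not> (\<exists>S F. wit V' E' S F)"
      proof
        assume "\<exists>S F. wit V' E' S F"
        then obtain S F where w: "wit V' E' S F" by blast
        have SV': "S \<subseteq> V'" and disj: "\<forall>K1\<in>F. \<forall>K2\<in>F. K1 \<noteq> K2 \<longrightarrow> K1 \<inter> K2 = {}"
          and un: "\<Union>F = V' - S" and cl': "\<forall>K\<in>F. \<forall>u\<in>K. \<forall>q\<in>V' - S. {u,q} \<in> E' \<longrightarrow> q \<in> K"
          and lt: "card S < card {K\<in>F. odd (card K)}"
          using w unfolding wit_def by auto
        define B where "B = S \<union> {a,b}"
        have SabD: "S \<inter> {a,b} = {}" using SV' unfolding V'_def by auto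
        have finS: "finite S" using SV' finV' finite_subset by blast
        have cB: "card B = card S + 2" unfolding B_def using card_Un_disjoint[OF finS _ SabD] ab by simp
        have VB: "V - B = V' - S" unfolding B_def V'_def by auto
        show False
        proof (rule barrier[OF g mc nb nt])
          show "B \<subseteq> V" using SV' a b unfolding B_def V'_def by auto
          show "2 \<le> card B" using cB by simp
          show "\<forall>K1\<in>F. \<forall>K2\<in>F. K1 \<noteq> K2 \<longrightarrow> K1 \<inter> K2 = {}" by (rule disj)
          show "\<Union>F = V - B" using un VB by simp
          show "\<forall>K\<in>F. \<forall>u\<in>K. \<forall>q\<in>V - B. {u,q} \<in> E \<longrightarrow> q \<in> K"
          proof (intro ballI impI)
            fix K u q assume K: "K \<in> F" "u \<in> K" "q \<in> V - B" "{u,q} \<in> E"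
            have uV: "u \<in> V' - S" using K(1,2) un by blast
            have qV: "q \<in> V' - S" using K(3) VB by simp
            have "{u,q} \<in> E'" unfolding E'_def using K(4) uV qV by auto
            thus "q \<in> K" using cl' K(1,2) qV by blast
          qed
          show "card B \<le> card {K\<in>F. odd (card K)}"
          proof -
            have "finite (V' - S)" using finV' by simp
            hence par: "even (card (V' - S)) \<longleftrightarrow> even (card {K\<in>F. odd (card K)})"
              using parity_part[of "V' - S" F] disj un by blast
            have "card V' = card V - 2" unfolding V'_def using card_Diff_subset[of "{a,b}" V] a b ab fin by simp
            moreover have "card V \<ge> 2"
            proof -
              have "{a,b} \<subseteq> V" using a b by auto
              hence "card {a,b} \<le> card V" using fin by (simp add: card_mono)
              thus ?thesis using ab by simp
            qed
            ultimately have evV': "even (card V')" using evV by simp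
            have "card V' = card S + card (V' - S)"
              using card_Diff_subset[OF finS SV'] card_mono[OF finV' SV'] by simp
            thus ?thesis using evV' par lt cB by presburger
          qed
        qed
      qed
    qed
    then obtain m' where m': "pmfun V' E' m'" by blast
    have M': "m' u \<in> V'" "m' u \<noteq> u" "m' (m' u) = u" "{u, m' u} \<in> E" "{u, m' u} \<subseteq> V'" if "u \<in> V'" for u
      using m' that unfolding pmfun_def E'_def by auto
    have vV': "v \<in> V'" using vV a(2) b(2) unfolding V'_def by auto
    have cV': "c \<in> V'" using c(3) ac bc unfolding V'_def by auto
    have aV': "a \<notin> V'" and bV': "b \<notin> V'" unfolding V'_def by auto
    have m'v: "m' v = c"
    proof -
      have "{v, m' v} \<in> E" using M'(4)[OF vV'] .
      hence "{v, m' v} = {v,a} \<or> {v, m' v} = {v,b} \<or> {v, m' v} = {v,c}" using star by simp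
      hence "m' v = a \<or> m' v = b \<or> m' v = c" using doubleton_same by metis
      thus ?thesis using M'(1)[OF vV'] aV' bV' by auto
    qed
    have m'c: "m' c = v" using M'(3)[OF vV'] m'v by simp
    define R where "R = V' - {v,c}"
    have Rm: "m' u \<in> R" if "u \<in> R" for u
    proof -
      have uV: "u \<in> V'" "u \<noteq> v" "u \<noteq> c" using that unfolding R_def by auto
      have "m' u \<noteq> v" using M'(3)[OF uV(1)] m'v uV(3) by metis
      moreover have "m' u \<noteq> c" using M'(3)[OF uV(1)] m'c uV(2) by metis
      ultimately show ?thesis using M'(1)[OF uV(1)] unfolding R_def by auto
    qed
    define Fv where "Fv = {{v,a},{v,b},{v,c}} \<union> (\<lambda>u. {u, m' u}) ` R"
    have img: "e \<in> (\<lambda>u. {u, m' u}) ` R \<longleftrightarrow> (\<exists>w\<in>R. e = {w, m' w})" for e by auto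
    have RV': "R \<subseteq> V'" unfolding R_def by auto
    have vR: "v \<notin> R" and cR: "c \<notin> R" unfolding R_def by auto
    have "v_matching V E v Fv" unfolding v_matching_def degree_def
    proof (intro conjI ballI)
      show "Fv \<subseteq> E"
      proof
        fix e assume "e \<in> Fv"
        thus "e \<in> E" unfolding Fv_def using inE a b c M'(4) RV' by auto
      qed
      have vset: "{e\<in>Fv. v \<in> e} = {{v,a},{v,b},{v,c}}"
      proof
        show "{e\<in>Fv. v \<in> e} \<subseteq> {{v,a},{v,b},{v,c}}"
        proof
          fix e assume e: "e \<in> {e\<in>Fv. v \<in> e}"
          show "e \<in> {{v,a},{v,b},{v,c}}"
          proof (rule ccontr)
            assume ne: "e \<notin> {{v,a},{v,b},{v,c}}"
            then obtain w where w: "w \<in> R" "e = {w, m' w}" using e unfolding Fv_def by auto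
            have "v = w \<or> v = m' w" using e w by auto
            moreover have "v \<noteq> w" using w vR by auto
            moreover have "v \<noteq> m' w" using Rm[OF w(1)] vR by auto
            ultimately show False by simp
          qed
        qed
        show "{{v,a},{v,b},{v,c}} \<subseteq> {e\<in>Fv. v \<in> e}" unfolding Fv_def by auto
      qed
      show "card {e\<in>Fv. v \<in> e} = 3" unfolding vset using ab bc ac a(2) b(2) c(2)
        by (simp add: doubleton_eq_iff)
      fix u assume u: "u \<in> V - {v}"
      show "card {e\<in>Fv. u \<in> e} = 1"
      proof (cases "u \<in> {a,b,c}")
        case True
        have "{e\<in>Fv. u \<in> e} = {{v,u}}"
        proof
          show "{e\<in>Fv. u \<in> e} \<subseteq> {{v,u}}"
          proof
            fix e assume e: "e \<in> {e\<in>Fv. u \<in> e}"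
            show "e \<in> {{v,u}}"
            proof (cases "e \<in> {{v,a},{v,b},{v,c}}")
              case True
              thus ?thesis using e \<open>u \<in> {a,b,c}\<close> u ab bc ac by auto
            next
              case False
              then obtain w where w: "w \<in> R" "e = {w, m' w}" using e unfolding Fv_def by auto
              have "u = w \<or> u = m' w" using e w by auto
              moreover have "w \<in> V'" "m' w \<in> R" using w(1) Rm RV' by auto
              ultimately have "u \<in> V' \<and> u \<noteq> c" using w(1) cR RV' by auto
              thus ?thesis using \<open>u \<in> {a,b,c}\<close> aV' bV' by auto
            qed
          qed
          show "{{v,u}} \<subseteq> {e\<in>Fv. u \<in> e}" unfolding Fv_def using True by auto
        qed
        thus ?thesis by simp
      next
        case False
        have uR: "u \<in> R" using u False unfolding R_def V'_def by auto
        have "{e\<in>Fv. u \<in> e} = {{u, m' u}}"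
        proof
          show "{e\<in>Fv. u \<in> e} \<subseteq> {{u, m' u}}"
          proof
            fix e assume e: "e \<in> {e\<in>Fv. u \<in> e}"
            show "e \<in> {{u, m' u}}"
            proof (cases "e \<in> {{v,a},{v,b},{v,c}}")
              case True
              thus ?thesis using e False u by auto
            next
              case F2: False
              then obtain w where w: "w \<in> R" "e = {w, m' w}" using e unfolding Fv_def by auto
              have wV: "w \<in> V'" using w(1) RV' by auto
              have "u = w \<or> u = m' w" using e w by auto
              thus ?thesis
              proof
                assume "u = w" thus ?thesis using w by simp
              next
                assume "u = m' w"
                hence "w = m' u" using M'(3)[OF wV] by simp
                thus ?thesis using w \<open>u = m' w\<close> by (auto simp: insert_commute)
              qed
            qed
          qed
          show "{{u, m' u}} \<subseteq> {e\<in>Fv. u \<in> e}" unfolding Fv_def using uR by auto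
        qed
        thus ?thesis by simp
      qed
    qed
    thus ?thesis unfolding lambda_matchable_def using vV by blast
  qed
  have "{v\<in>V. lambda_matchable V E v} = V" using lm by auto
  thus ?thesis using lm unfolding lambda_def by simp
qed


end
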